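(* Let $w$ be a positive integer, $x$ an integer with $0\le x\le p-1$, and $h$ a non-negative integer. If $T_n(x)\equiv x\pmod{p^w}$ and $T'_n(x)\equiv 1\pmod{p^w}$, then $T'_n(x+hp)\equiv T'_n(x)\pmod{p^{w+1}}$ and, for every integer $m\ge 2$, $$\frac{T^{(m)}_n(x+hp)\,p^m}{m!}\equiv 0\pmod{p^{w+2}}.$$
   Context: $p$ is a prime with $p>3$ and $n>1$ is an integer with $\gcd(n,p)=\gcd(n,p^2-1)=1$. $T_n(x)\in\mathbb{Z}[x]$ is the Chebyshev polynomial of the first kind: $T_0=1$, $T_1=x$, $T_d=2xT_{d-1}-T_{d-2}$. $T^{(m)}_n$ is its $m$-th derivative, $T'_n=T^{(1)}_n$; note $T^{(m)}_n(a)/m!\in\mathbb{Z}$ for integers $a$. *)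

theory Defs
  imports "HOL-Computational_Algebra.Polynomial" "HOL-Number_Theory.Cong"
begin

fun cheb :: "nat \<Rightarrow> int poly" where
  "cheb 0 = 1"
| "cheb (Suc 0) = [:0, 1:]"
| "cheb (Suc (Suc d)) = [:0, 2:] * cheb (Suc d) - cheb d"

definition cheb_deriv :: "nat \<Rightarrow> nat \<Rightarrow> int poly" where
  "cheb_deriv m n = (pderiv ^^ m) (cheb n)"

end

theory Submission
  imports Defs
begin

definition XX :: "int poly" where "XX = [:0, 1:]"
lemma cheb1: "cheb (Suc 0) = XX" by (simp add: XX_def)
declare cheb.simps(3)[simp del] cheb.simps(2)[simp del]
declare cheb1[simp]

lemma cheb_rec: "cheb (Suc (Suc d)) = 2 * XX * cheb (Suc d) - cheb d"
proof -
  have "[:0, 2:] = (2::int poly) * XX" by (simp add: numeral_poly XX_def)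
  then show ?thesis by (simp add: cheb.simps(3))
qed

lemma pderiv_XX: "pderiv XX = 1"
  by (simp add: pderiv_pCons XX_def)

lemma cheb_aux: "(1 - XX^2) * pderiv (cheb (Suc n)) = of_nat (Suc n) * (cheb n - XX * cheb (Suc n))"
proof (induction n rule: nat_less_induct)
  case (1 n)
  show ?case
  proof (cases n)
    case 0
    then show ?thesis by (simp add: XX_def pderiv_pCons algebra_simps power2_eq_square numeral_poly)
  next
    case (Suc m)
    note S = Suc
    show ?thesis
    proof (cases m)
      case 0
      then show ?thesis using S by (simp add: cheb_rec pderiv_mult pderiv_diff pderiv_XX algebra_simps power2_eq_square)
    next
      case (Suc k)
      have IH1: "(1 - XX^2) * pderiv (cheb (Suc m)) = of_nat (Suc m) * (cheb m - XX * cheb (Suc m))"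
        using 1 S by simp
      have IH2: "(1 - XX^2) * pderiv (cheb m) = of_nat m * (cheb k - XX * cheb m)"
        using 1 S Suc by simp
      have e1: "cheb (Suc (Suc m)) = 2 * XX * cheb (Suc m) - cheb m" by (rule cheb_rec)
      have e2: "cheb k = 2 * XX * cheb m - cheb (Suc m)" using Suc cheb_rec[of k] by simp
      have d: "pderiv (cheb (Suc (Suc m))) = 2 * cheb (Suc m) + 2 * XX * pderiv (cheb (Suc m)) - pderiv (cheb m)"
        by (simp add: cheb_rec pderiv_mult pderiv_diff pderiv_XX algebra_simps)
      have "(1 - XX^2) * pderiv (cheb (Suc (Suc m))) = 2 * (1 - XX^2) * cheb (Suc m) + 2 * XX * ((1 - XX^2) * pderiv (cheb (Suc m))) - (1 - XX^2) * pderiv (cheb m)"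
        unfolding d by (simp add: algebra_simps)
      also have "\<dots> = 2 * (1 - XX^2) * cheb (Suc m) + 2 * XX * (of_nat (Suc m) * (cheb m - XX * cheb (Suc m))) - of_nat m * (cheb k - XX * cheb m)"
        using IH1 IH2 by simp
      also have "\<dots> = of_nat (Suc (Suc m)) * (cheb (Suc m) - XX * cheb (Suc (Suc m)))"
        unfolding e1 e2 by (simp add: algebra_simps power2_eq_square) 
      finally show ?thesis using S by simp
    qed
  qed
qed

definition ode :: "nat \<Rightarrow> int poly" where
  "ode n = (1 - XX^2) * pderiv (pderiv (cheb n)) - XX * pderiv (cheb n) + of_nat (n^2) * cheb n"

lemma cheb_ode: "ode n = 0"
proof (induction n rule: nat_less_induct)
  case (1 n)
  show ?case
  proof (cases n)
    case 0
    then show ?thesis by (simp add: ode_def)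
  next
    case (Suc m)
    note S = Suc
    show ?thesis
    proof (cases m)
      case 0
      then show ?thesis using S by (simp add: ode_def pderiv_XX)
    next
      case (Suc k)
      have IH1: "ode k = 0" and IH2: "ode (Suc k) = 0" using 1 S Suc by auto
      have d1: "pderiv (cheb (Suc (Suc k))) = 2 * cheb (Suc k) + 2 * XX * pderiv (cheb (Suc k)) - pderiv (cheb k)"
        by (simp add: cheb_rec pderiv_mult pderiv_diff pderiv_XX algebra_simps)
      have d2: "pderiv (pderiv (cheb (Suc (Suc k)))) = 4 * pderiv (cheb (Suc k)) + 2 * XX * pderiv (pderiv (cheb (Suc k))) - pderiv (pderiv (cheb k))"
        unfolding d1 by (simp add: pderiv_mult pderiv_diff pderiv_add pderiv_XX algebra_simps)
      have "ode (Suc (Suc k)) = 2 * XX * ode (Suc k) - ode k + 4 * ((1 - XX^2) * pderiv (cheb (Suc k)) - of_nat (Suc k) * (cheb k - XX * cheb (Suc k)))"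
        unfolding ode_def unfolding d2 unfolding d1 unfolding cheb_rec[of k] by (simp add: algebra_simps power2_eq_square)
      also have "\<dots> = 0" using IH1 IH2 cheb_aux[of k] by simp
      finally show ?thesis using S Suc by simp
    qed
  qed
qed

lemma poly_XX[simp]: "poly XX a = a" by (simp add: XX_def)

lemma cheb_at_1: "poly (cheb n) 1 = 1 \<and> poly (cheb n) (-1) = (-1)^n"
proof (induction n rule: nat_less_induct)
  case (1 n)
  show ?case
  proof (cases n)
    case 0 then show ?thesis by simp
  next
    case (Suc m)
    show ?thesis
    proof (cases m)
      case 0 then show ?thesis using Suc by simp
    next
      case (Suc k)
      then show ?thesis using 1 \<open>n = Suc m\<close> by (simp add: cheb_rec)
    qed
  qed
qed

lemma hpd_Suc: "(pderiv ^^ Suc k) f = pderiv ((pderiv ^^ k) f)" by simp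

lemma ode_k: "(1 - XX^2) * (pderiv ^^ (k+2)) (cheb n) - of_nat (2*k+1) * XX * (pderiv ^^ (k+1)) (cheb n)
   + (of_nat (n^2) - of_nat (k^2)) * (pderiv ^^ k) (cheb n) = 0"
proof (induction k)
  case 0
  then show ?case using cheb_ode[of n] by (simp add: ode_def numeral_2_eq_2)
next
  case (Suc k)
  let ?D = "\<lambda>j. (pderiv ^^ j) (cheb n)"
  have "pderiv ((1 - XX^2) * ?D (k+2) - of_nat (2*k+1) * XX * ?D (k+1) + (of_nat (n^2) - of_nat (k^2)) * ?D k) = 0"
    using Suc by simp
  moreover have "pderiv ((1 - XX^2) * ?D (k+2) - of_nat (2*k+1) * XX * ?D (k+1) + (of_nat (n^2) - of_nat (k^2)) * ?D k)
     = (1 - XX^2) * ?D (Suc k+2) - of_nat (2*Suc k+1) * XX * ?D (Suc k+1) + (of_nat (n^2) - of_nat ((Suc k)^2)) * ?D (Suc k)"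
    by (simp add: pderiv_mult pderiv_diff pderiv_add pderiv_XX pderiv_power power2_eq_square algebra_simps del: funpow.simps add: hpd_Suc)
  ultimately show ?case by simp
qed

lemma ode_pt: "(1 - a^2) * poly ((pderiv ^^ (k+2)) (cheb n)) a =
   of_nat (2*k+1) * a * poly ((pderiv ^^ (k+1)) (cheb n)) a - (of_nat (n^2) - of_nat (k^2)) * poly ((pderiv ^^ k) (cheb n)) a"
proof -
  have "poly ((1 - XX^2) * (pderiv ^^ (k+2)) (cheb n) - of_nat (2*k+1) * XX * (pderiv ^^ (k+1)) (cheb n)
   + (of_nat (n^2) - of_nat (k^2)) * (pderiv ^^ k) (cheb n)) a = 0" using ode_k[of k n] by simp
  then show ?thesis by (simp add: algebra_simps of_nat_poly)
qed

lemma cheb_B: "(a^2 - 1) * poly (pderiv (cheb n)) a ^ 2 = of_nat (n^2) * (poly (cheb n) a ^ 2 - 1)"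
proof -
  define F where "F = (XX^2 - 1) * pderiv (cheb n) ^ 2 - of_nat (n^2) * (cheb n ^ 2 - 1)"
  have "pderiv F = - 2 * pderiv (cheb n) * ode n"
    unfolding F_def ode_def
    by (simp add: pderiv_mult pderiv_diff pderiv_add pderiv_XX pderiv_power power2_eq_square algebra_simps)
  then have "pderiv F = 0" by (simp add: cheb_ode)
  then have "degree F = 0" by (simp add: pderiv_eq_0_iff)
  then have "poly F a = poly F 1"
    by (metis degree_eq_zeroE poly_pCons poly_0 mult_zero_right add_0_right)
  also have "poly F 1 = 0" using cheb_at_1[of n] by (simp add: F_def)
  finally show ?thesis by (simp add: F_def of_nat_poly)
qed

lemma higher_pderiv_pcompose_lin:
  "(pderiv ^^ m) (pcompose P [:b, c:]) = smult (c^m) (pcompose ((pderiv ^^ m) P) [:b, c:])"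
proof (induction m)
  case 0 then show ?case by simp
next
  case (Suc m)
  then show ?case by (simp add: pderiv_smult pderiv_pcompose pderiv_pCons mult.commute)
qed

lemma fact_coeff_pcompose:
  "fact m * coeff (pcompose P [:b, c:]) m = c^m * poly ((pderiv ^^ m) P) (b::int)"
proof -
  have "coeff ((pderiv ^^ m) (pcompose P [:b, c:])) 0 = pochhammer (of_nat 1) m * coeff (pcompose P [:b, c:]) m"
    by (simp add: coeff_higher_pderiv)
  also have "pochhammer (of_nat 1) m = (fact m :: int)" by (simp add: pochhammer_fact)
  finally have "fact m * coeff (pcompose P [:b, c:]) m = coeff ((pderiv ^^ m) (pcompose P [:b, c:])) 0" by simp
  also have "\<dots> = c^m * poly ((pderiv ^^ m) P) b"
    unfolding higher_pderiv_pcompose_lin by (simp add: poly_0_coeff_0[symmetric] poly_pcompose)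
  finally show ?thesis .
qed

lemma shift_lemma:
  fixes R :: "int poly" and d h :: int
  assumes "\<And>j. j \<ge> 2 \<Longrightarrow> d dvd coeff R j"
  shows "(\<forall>j\<ge>2. d dvd coeff (pcompose R [:h, 1:]) j) \<and> [coeff (pcompose R [:h, 1:]) 1 = coeff R 1] (mod d)"
proof -
  obtain a T1 where T: "R - [:coeff R 0, coeff R 1:] = pCons a T1" by (metis pCons_cases)
  obtain b T2 where T1: "T1 = pCons b T2" by (metis pCons_cases)
  have a0: "a = 0" using arg_cong[OF T, of "\<lambda>p. coeff p 0"] by simp
  have b0: "b = 0" using arg_cong[OF T, of "\<lambda>p. coeff p 1"] T1 by simp
  have "d dvd coeff T2 j" for j
  proof -
    have "coeff T2 j = coeff R (j+2)" using arg_cong[OF T, of "\<lambda>p. coeff p (j+2)"] T1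
      by (simp add: numeral_2_eq_2)
    then show ?thesis using assms[of "j+2"] by simp
  qed
  then have "[:d:] dvd T2" by (simp add: const_poly_dvd_iff)
  then obtain S where S: "T2 = [:d:] * S" by (metis dvdE)
  have R: "R = [:coeff R 0, coeff R 1:] + pCons 0 (pCons 0 (smult d S))"
  proof -
    have "R = [:coeff R 0, coeff R 1:] + (R - [:coeff R 0, coeff R 1:])" by simp
    also have "R - [:coeff R 0, coeff R 1:] = pCons 0 (pCons 0 (smult d S))" using T T1 a0 b0 S by simp
    finally show ?thesis .
  qed
  define q :: "int poly" where "q = [:h, 1:]"
  have C: "pcompose R q = [:coeff R 0 + coeff R 1 * h, coeff R 1:] + smult d (q * (q * pcompose S q))"
    by (subst R) (simp add: pcompose_add pcompose_pCons pcompose_smult q_def algebra_simps)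
  have "(\<forall>j\<ge>2. d dvd coeff (pcompose R q) j)"
  proof (intro allI impI)
    fix j :: nat assume "j \<ge> 2"
    then obtain i where "j = Suc (Suc i)" by (metis add_2_eq_Suc le_Suc_ex)
    then show "d dvd coeff (pcompose R q) j" unfolding C by simp
  qed
  moreover have "[coeff (pcompose R q) 1 = coeff R 1] (mod d)"
    unfolding C by (simp add: cong_iff_dvd_diff)
  ultimately show ?thesis by (simp add: q_def)
qed

lemma legendre_step:
  fixes p :: nat assumes p: "prime p"
  shows "multiplicity p (fact k :: nat) = k div p + multiplicity p (fact (k div p) :: nat)"
proof (induction k)
  case 0 then show ?case by simp
next
  case (Suc k)
  have p0: "p > 0" using p prime_gt_0_nat by blast
  have pe: "prime_elem p" using p by simp
  have m1: "multiplicity p (fact (Suc k) :: nat) = multiplicity p (Suc k) + multiplicity p (fact k :: nat)"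
    using prime_elem_multiplicity_mult_distrib[OF pe, of "Suc k" "fact k"] by (simp add: fact_Suc)
  show ?case
  proof (cases "p dvd Suc k")
    case False
    then have "multiplicity p (Suc k) = 0" by (simp add: not_dvd_imp_multiplicity_0)
    moreover have "Suc k div p = k div p" using False p0
      by (simp add: div_Suc dvd_eq_mod_eq_0)
    ultimately show ?thesis using m1 Suc by simp
  next
    case True
    then obtain q where q: "Suc k = p * q" by blast
    then have q0: "q > 0" by (cases q) auto
    have d1: "Suc k div p = q" using q p0 by simp
    have d2: "k div p = q - 1"
    proof -
      have "k = (p - 1) + (q - 1) * p" using q q0 p0
        by (cases q) (auto simp: algebra_simps)
      then have "k div p = ((p - 1) + (q - 1) * p) div p" by (simp only:)
      also have "\<dots> = (q - 1) + (p - 1) div p" using p0 by (intro div_mult_self1) simp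
      finally show ?thesis using p0 by simp
    qed
    have "multiplicity p (Suc k) = Suc (multiplicity p q)"
      unfolding q using q0 p by (intro multiplicity_times_same) (auto simp: prime_gt_1_nat)
    moreover have "multiplicity p (fact q :: nat) = multiplicity p q + multiplicity p (fact (q - 1) :: nat)"
    proof -
      have "(fact q :: nat) = q * fact (q - 1)" using q0 by (cases q) simp_all
      then show ?thesis using prime_elem_multiplicity_mult_distrib[OF pe, of q "fact (q-1)"] q0 by simp
    qed
    ultimately show ?thesis using m1 Suc d1 d2 q0 by simp
  qed
qed


lemma legendre_bound:
  fixes p :: nat assumes p: "prime p" and "k \<ge> 1"
  shows "(p - 1) * multiplicity p (fact k :: nat) \<le> k - 1"
  using assms(2)
proof (induction k rule: less_induct)
  case (less k)
  have p1: "p > 1" using p prime_gt_1_nat by blast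
  show ?case
  proof (cases "k div p = 0")
    case True
    have "multiplicity p (fact k :: nat) = 0" using legendre_step[OF p, of k] unfolding True by simp
    then show ?thesis by simp
  next
    case False
    have "k div p < k" using p1 less.prems by (intro div_less_dividend) auto
    then have IH: "(p - 1) * multiplicity p (fact (k div p) :: nat) \<le> k div p - 1" using less.IH[of "k div p"] False by linarith
    have "(p - 1) * multiplicity p (fact k :: nat) = (p - 1) * (k div p) + (p - 1) * multiplicity p (fact (k div p) :: nat)"
      using legendre_step[OF p, of k] by (simp only: add_mult_distrib2)
    also have "\<dots> \<le> (p - 1) * (k div p) + (k div p - 1)" using IH by (rule add_left_mono)
    also have "\<dots> = p * (k div p) - 1"
    proof -
      have "(p - 1) * (k div p) + (k div p - 1) + 1 = p * (k div p)"
      proof -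
        obtain p' where pp: "p = Suc p'" using p1 by (cases p) auto
        have "(p - 1) * (k div p) = p' * (k div p)" using pp by simp
        moreover have "p * (k div p) = k div p + p' * (k div p)" using pp by simp
        ultimately show ?thesis using False by linarith
      qed
      then show ?thesis by linarith
    qed
    also have "\<dots> \<le> k - 1" using times_div_less_eq_dividend[of p k] by (rule diff_le_mono)
    finally show ?thesis .
  qed
qed

lemma div_cancel:
  fixes P F c :: int
  assumes P: "prime P" and d: "P^(a+b) dvd F*c" and F: "F \<noteq> 0" and nd: "\<not> P^(Suc b) dvd F"
  shows "P^a dvd c"
proof (cases "c = 0")
  case True then show ?thesis by simp
next
  case False
  have nu: "\<not> is_unit P" using P not_prime_unit by blast
  have pe: "prime_elem P" using P by (rule prime_imp_prime_elem)
  have Fc: "F * c \<noteq> 0" using F False by simp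
  have "a + b \<le> multiplicity P (F*c)" using d power_dvd_iff_le_multiplicity[OF Fc nu] by simp
  also have "multiplicity P (F*c) = multiplicity P F + multiplicity P c"
    by (rule prime_elem_multiplicity_mult_distrib[OF pe F False])
  finally have 1: "a + b \<le> multiplicity P F + multiplicity P c" .
  have "multiplicity P F \<le> b"
  proof (rule ccontr)
    assume "\<not> multiplicity P F \<le> b"
    then have "Suc b \<le> multiplicity P F" by simp
    then have "P^(Suc b) dvd F" by (rule multiplicity_dvd')
    with nd show False by simp
  qed
  with 1 have "a \<le> multiplicity P c" by simp
  then show ?thesis by (rule multiplicity_dvd')
qed

lemma fact_not_dvd:
  fixes p :: nat
  assumes p: "prime p" and p3: "p > 3" and m: "m \<ge> 2" and k1: "k \<ge> 1" and k2: "k \<le> 2*m"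
  shows "\<not> (int p)^(Suc (m-2)) dvd (fact k :: int)"
proof
  assume H: "(int p)^(Suc (m-2)) dvd (fact k :: int)"
  have "(fact k :: int) = int (fact k)" by (simp add: of_nat_fact)
  with H have H2: "p^(Suc (m-2)) dvd (fact k :: nat)"
    by (metis of_nat_power int_dvd_int_iff)
  have nu: "\<not> is_unit p" using p not_prime_unit by blast
  have fk: "(fact k :: nat) \<noteq> 0" by simp
  have "Suc (m-2) \<le> multiplicity p (fact k :: nat)" using H2 power_dvd_iff_le_multiplicity[OF fk nu, of "Suc (m-2)"] by blast
  moreover have "(p - 1) * multiplicity p (fact k :: nat) \<le> k - 1" by (rule legendre_bound[OF p k1])
  moreover have "4 * multiplicity p (fact k :: nat) \<le> (p - 1) * multiplicity p (fact k :: nat)"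
  proof -
    have "p \<noteq> 4"
    proof
      assume "p = 4"
      then have "(2::nat) dvd p" by simp
      moreover from p have "\<forall>m. m dvd p \<longrightarrow> m = 1 \<or> m = p" by (simp add: prime_nat_iff)
      ultimately have "(2::nat) = 1 \<or> 2 = p" by blast
      with \<open>p = 4\<close> show False by simp
    qed
    then have "(4::nat) \<le> p - 1" using p3 by presburger
    then show ?thesis by (rule mult_right_mono) simp
  qed
  ultimately show False using m k2 by linarith
qed

definition oddprod :: "nat \<Rightarrow> int" where "oddprod m = (\<Prod>j<m. of_nat (2*j+1))"

lemma fact_double: "(fact (2*m) :: int) = 2^m * fact m * oddprod m"
proof (induction m)
  case 0 then show ?case by (simp add: oddprod_def)
next
  case (Suc m)
  have e: "2 * Suc m = Suc (Suc (2*m))" by simp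
  have "(fact (2 * Suc m) :: int) = of_nat (Suc (Suc (2*m))) * (of_nat (Suc (2*m)) * fact (2*m))"
    unfolding e by (simp only: fact_Suc)
  also have "\<dots> = 2^(Suc m) * fact (Suc m) * oddprod (Suc m)"
    unfolding Suc by (simp add: oddprod_def fact_Suc algebra_simps)
  finally show ?case .
qed

lemma special_rec:
  fixes s :: int assumes s: "s^2 = 1"
  shows "of_nat (2*k+1) * poly ((pderiv ^^ (k+1)) (cheb n)) s = s * (int n^2 - int k^2) * poly ((pderiv ^^ k) (cheb n)) s"
proof -
  have "0 = of_nat (2*k+1) * s * poly ((pderiv ^^ (k+1)) (cheb n)) s - (of_nat (n^2) - of_nat (k^2)) * poly ((pderiv ^^ k) (cheb n)) s"
    using ode_pt[of s k n] s by simp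
  then have "of_nat (2*k+1) * s * poly ((pderiv ^^ (k+1)) (cheb n)) s = (int n^2 - int k^2) * poly ((pderiv ^^ k) (cheb n)) s"
    by simp
  then have "s * (int n^2 - int k^2) * poly ((pderiv ^^ k) (cheb n)) s = s * (of_nat (2*k+1) * s * poly ((pderiv ^^ (k+1)) (cheb n)) s)"
    by (simp only: mult.assoc)
  also have "\<dots> = of_nat (2*k+1) * (s * s) * poly ((pderiv ^^ (k+1)) (cheb n)) s" by (simp only: mult_ac)
  also have "\<dots> = of_nat (2*k+1) * poly ((pderiv ^^ (k+1)) (cheb n)) s" using s by (simp add: power2_eq_square)
  finally show ?thesis by simp
qed

lemma special_dvd:
  fixes s :: int assumes s: "s^2 = 1"
  shows "(int n^2 - 1) dvd oddprod (k+2) * poly ((pderiv ^^ (k+2)) (cheb n)) s"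
proof (induction k)
  case 0
  have "oddprod 2 = 3" by (simp add: oddprod_def numeral_2_eq_2)
  moreover have "of_nat (2*1+1) * poly ((pderiv ^^ (1+1)) (cheb n)) s = s * (int n^2 - int 1^2) * poly ((pderiv ^^ 1) (cheb n)) s"
    by (rule special_rec[OF s])
  ultimately show ?case by (simp add: numeral_2_eq_2)
next
  case (Suc k)
  have o: "oddprod (Suc k + 2) = oddprod (k+2) * of_nat (2*(k+2)+1)" by (simp add: oddprod_def)
  have r: "of_nat (2*(k+2)+1) * poly ((pderiv ^^ ((k+2)+1)) (cheb n)) s = s * (int n^2 - int (k+2)^2) * poly ((pderiv ^^ (k+2)) (cheb n)) s"
    by (rule special_rec[OF s])
  have "oddprod (Suc k + 2) * poly ((pderiv ^^ (Suc k + 2)) (cheb n)) s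
      = oddprod (k+2) * (of_nat (2*(k+2)+1) * poly ((pderiv ^^ ((k+2)+1)) (cheb n)) s)"
    unfolding o by (simp add: algebra_simps)
  also have "\<dots> = s * (int n^2 - int (k+2)^2) * (oddprod (k+2) * poly ((pderiv ^^ (k+2)) (cheb n)) s)"
    unfolding r by (simp add: algebra_simps)
  finally show ?case using Suc by simp
qed

lemma special_good:
  fixes p :: nat and s :: int
  assumes p: "prime p" and p3: "p > 3" and s: "s^2 = 1" and e: "(int p)^e dvd int n^2 - 1" and m: "m \<ge> 2"
  shows "(int p)^(e+2) dvd coeff (pcompose (cheb n) [:s, int p:]) m"
proof -
  let ?P = "int p"
  let ?c = "coeff (pcompose (cheb n) [:s, int p:]) m"
  let ?D = "poly ((pderiv ^^ m) (cheb n)) s"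
  have fc: "fact m * ?c = ?P^m * ?D" by (rule fact_coeff_pcompose)
  have k0: "m = (m - 2) + 2" using m by simp
  obtain k where k: "m = k + 2" using k0 by blast
  have "?P^e dvd oddprod m * ?D" using dvd_trans[OF e special_dvd[OF s, of n k]] k by simp
  then have "?P^e * ?P^m dvd (oddprod m * ?D) * (2^m * ?P^m)" by (intro mult_dvd_mono) simp_all
  moreover have "fact (2*m) * ?c = (oddprod m * ?D) * (2^m * ?P^m)"
    unfolding fact_double by (simp add: fc[symmetric] algebra_simps)
  ultimately have A: "?P^(e+m) dvd fact (2*m) * ?c" by (simp add: power_add)
  have eq: "(e+2) + (m-2) = e + m" using m by simp
  have B: "?P^((e+2) + (m-2)) dvd fact (2*m) * ?c" unfolding eq by (rule A)
  have P: "prime ?P" using p by simp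
  have nd: "\<not> ?P^(Suc (m-2)) dvd fact (2*m)" using fact_not_dvd[of p m "2*m"] p p3 m by simp
  show ?thesis using div_cancel[OF P B _ nd] by simp
qed

lemma deriv_good:
  fixes p :: nat and b :: int
  assumes p: "prime p" and p3: "p > 3" and d: "(int p)^e dvd poly ((pderiv ^^ m) (cheb n)) b" and m: "m \<ge> 2"
  shows "(int p)^(e+2) dvd coeff (pcompose (cheb n) [:b, int p:]) m"
proof -
  have fc: "fact m * coeff (pcompose (cheb n) [:b, int p:]) m = (int p)^m * poly ((pderiv ^^ m) (cheb n)) b"
    by (rule fact_coeff_pcompose)
  have eq: "(e+2) + (m-2) = e + m" using m by simp
  have B: "(int p)^((e+2)+(m-2)) dvd fact m * coeff (pcompose (cheb n) [:b, int p:]) m"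
    unfolding fc eq using d by (simp add: power_add mult.commute mult_dvd_mono)
  have P: "prime (int p)" using p by simp
  have nd: "\<not> (int p)^(Suc (m-2)) dvd fact m" using fact_not_dvd[of p m m] p p3 m by simp
  show ?thesis using div_cancel[OF P B _ nd] by simp
qed

lemma D1_at_1: "poly (pderiv (cheb n)) 1 = int n^2"
  using ode_pt[of 1 0 n] cheb_at_1[of n] by simp

lemma D1_at_m1: assumes "odd n" shows "poly (pderiv (cheb n)) (-1) = int n^2"
  using ode_pt[of "-1" 0 n] cheb_at_1[of n] assms by simp

lemma caseA_good:
  fixes p n w :: nat and x :: int
  assumes p: "prime p" and p3: "p > 3" and u: "\<not> int p dvd (1 - x^2)"
    and h1: "[poly (cheb n) x = x] (mod (int p ^ w))"
    and h2: "[poly (pderiv (cheb n)) x = 1] (mod (int p ^ w))"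
  shows "\<forall>m\<ge>2. (int p)^(w+2) dvd coeff (pcompose (cheb n) [:x, int p:]) m"
proof -
  let ?P = "int p"
  let ?D = "\<lambda>k. poly ((pderiv ^^ k) (cheb n)) x"
  have P: "prime ?P" using p by simp
  have cop: "coprime (?P^w) (1 - x^2)" using prime_imp_coprime[OF P u] by simp
  have cop2: "coprime (?P^w) (x^2 - 1)" using cop by (metis coprime_minus_right_iff minus_diff_eq)
  have canc: "?P^w dvd Y" if "?P^w dvd (1 - x^2) * Y" for Y
    using that coprime_dvd_mult_right_iff[OF cop] by simp
  have B: "(x^2 - 1) * poly (pderiv (cheb n)) x ^ 2 = of_nat (n^2) * (poly (cheb n) x ^ 2 - 1)"
    by (rule cheb_B)
  have c1: "[(x^2 - 1) * poly (pderiv (cheb n)) x ^ 2 = (x^2 - 1) * 1 ^ 2] (mod ?P^w)"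
    by (intro cong_mult cong_pow h2 cong_refl)
  have c2: "[of_nat (n^2) * (poly (cheb n) x ^ 2 - 1) = of_nat (n^2) * (x ^ 2 - 1)] (mod ?P^w)"
    by (intro cong_mult cong_diff cong_pow h1 cong_refl)
  have "[(x^2 - 1) * 1 ^ 2 = of_nat (n^2) * (x ^ 2 - 1)] (mod ?P^w)"
    using cong_trans[OF cong_sym[OF c1] c2[folded B]] .
  then have "?P^w dvd (x^2 - 1) * (int n^2 - 1)"
    by (simp add: cong_iff_dvd_diff algebra_simps dvd_diff_commute)
  then have nn: "?P^w dvd int n^2 - 1" using coprime_dvd_mult_right_iff[OF cop2] by simp
  have "?P^w dvd ?D (k+2) \<and> ?P^w dvd ?D (k+3)" for k
  proof (induction k)
    case 0
    have d1: "?P^w dvd ?D 1 - 1" using h2 by (simp add: cong_iff_dvd_diff)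
    have d0: "?P^w dvd ?D 0 - x" using h1 by (simp add: cong_iff_dvd_diff)
    have e2: "(1 - x^2) * ?D (0+2) = x * (?D 1 - 1) - int n^2 * (?D 0 - x) - x * (int n^2 - 1)"
      using ode_pt[of x 0 n] by (simp add: algebra_simps)
    have "?P^w dvd (1 - x^2) * ?D (0+2)"
      unfolding e2 by (intro dvd_diff dvd_mult d1 d0 nn)
    then have D2: "?P^w dvd ?D 2" using canc by (simp only: add_0)
    have e3: "(1 - x^2) * ?D (1+2) = 3 * x * ?D 2 - (int n^2 - 1) * ?D 1"
      using ode_pt[of x 1 n] by (simp add: algebra_simps numeral_3_eq_3 numeral_2_eq_2)
    have "?P^w dvd (1 - x^2) * ?D (1+2)"
      unfolding e3 by (intro dvd_diff) (use D2 nn in simp_all)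
    then have D3: "?P^w dvd ?D 3" using canc by (simp only: one_plus_numeral semiring_norm)
    show ?case using D2 D3 by (simp only: add_0)
  next
    case (Suc k)
    have e: "(1 - x^2) * ?D (k+2+2) = of_nat (2*(k+2)+1) * x * ?D (k+2+1) - (of_nat (n^2) - of_nat ((k+2)^2)) * ?D (k+2)"
      by (rule ode_pt)
    have i1: "k+2+1 = k+3" by simp
    have i2: "k+2+2 = Suc k + 3" by simp
    have i3: "Suc k + 2 = k + 3" by simp
    have "?P^w dvd (1 - x^2) * ?D (k+2+2)"
      unfolding e i1 by (intro dvd_diff dvd_mult; use Suc.IH in blast)
    then have "?P^w dvd ?D (k+2+2)" using canc by blast
    then show ?case using Suc.IH unfolding i2 i3 by blast
  qed
  note all = this
  have "?P^w dvd ?D m" if "m \<ge> 2" for m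
  proof -
    have "m = (m - 2) + 2" using that by simp
    then show ?thesis using all[of "m-2"] by (metis (no_types))
  qed
  then show ?thesis using deriv_good[OF p p3] by blast
qed

lemma coeff1_pcompose: "coeff (pcompose T [:b, c:]) 1 = c * poly (pderiv T) (b::int)"
  using fact_coeff_pcompose[of 1 T b c] by simp

lemma comp_shift: "pcompose (pcompose T [:b, c:]) [:t, 1:] = pcompose T [:b + t*c, c::int:]"
proof -
  have "pcompose [:b, c:] [:t, 1:] = [:b + t*c, c:]" by (simp add: pcompose_pCons algebra_simps)
  then show ?thesis by (metis pcompose_assoc)
qed

lemma caseC_good:
  fixes p n w :: nat
  assumes p: "prime p" and p3: "p > 3" and n: "odd n"
    and h2: "[poly (pderiv (cheb n)) (int p - 1) = 1] (mod (int p ^ w))"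
  shows "\<forall>m\<ge>2. (int p)^(w+2) dvd coeff (pcompose (cheb n) [:-1, int p:]) m"
proof -
  let ?P = "int p"
  let ?R = "pcompose (cheb n) [:-1, int p:]"
  have s: "(-1::int)^2 = 1" by simp
  have step: "?P^(e+1) dvd int n^2 - 1" if e: "?P^e dvd int n^2 - 1" and ew: "e < w" for e
  proof -
    have g: "\<And>j. j \<ge> 2 \<Longrightarrow> ?P^(e+2) dvd coeff ?R j"
      using special_good[OF p p3 s e] by blast
    have eqc: "pcompose ?R [:1, 1:] = pcompose (cheb n) [:int p - 1, int p:]"
      by (simp add: comp_shift)
    have "[coeff (pcompose (cheb n) [:int p - 1, int p:]) 1 = coeff ?R 1] (mod ?P^(e+2))"
      using shift_lemma[OF g, of 1] unfolding eqc by blast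
    then have "[?P * poly (pderiv (cheb n)) (int p - 1) = ?P * poly (pderiv (cheb n)) (-1)] (mod ?P^(e+2))"
      unfolding coeff1_pcompose .
    then have "?P * ?P^(e+1) dvd ?P * (poly (pderiv (cheb n)) (int p - 1) - int n^2)"
      using D1_at_m1[OF n] by (simp add: cong_iff_dvd_diff algebra_simps)
    then have a: "?P^(e+1) dvd poly (pderiv (cheb n)) (int p - 1) - int n^2"
      using p by (subst (asm) dvd_mult_cancel_left) simp
    have "?P^(e+1) dvd ?P^w" using ew by (intro le_imp_power_dvd) simp
    moreover have "?P^w dvd poly (pderiv (cheb n)) (int p - 1) - 1" using h2 by (simp add: cong_iff_dvd_diff)
    ultimately have b: "?P^(e+1) dvd poly (pderiv (cheb n)) (int p - 1) - 1" by (rule dvd_trans)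
    have "?P^(e+1) dvd (poly (pderiv (cheb n)) (int p - 1) - 1) - (poly (pderiv (cheb n)) (int p - 1) - int n^2)"
      using a b by (rule dvd_diff[rotated])
    then show ?thesis by simp
  qed
  have "e \<le> w \<Longrightarrow> ?P^e dvd int n^2 - 1" for e
  proof (induction e)
    case 0 then show ?case by simp
  next
    case (Suc e) then show ?case using step by simp
  qed
  then have "?P^w dvd int n^2 - 1" by simp
  then show ?thesis using special_good[OF p p3 s] by blast
qed

lemma odd_n:
  fixes p n :: nat
  assumes p: "prime p" and p3: "p > 3" and c: "coprime n (p^2 - 1)"
  shows "odd n"
proof
  assume en: "even n"
  have op: "odd p" using prime_odd_nat[OF p] p3 by simp
  then have "odd (p^2)" by simp
  moreover have "p^2 \<ge> 1" using p3 by simp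
  ultimately have "even (p^2 - 1)" by (simp add: even_diff_nat)
  with en c have "is_unit (2::nat)" using coprime_common_divisor by blast
  then show False by simp
qed

theorem lemma5:
  fixes p n w h :: nat and x :: int
  assumes "prime p" and "p > 3" and "n > 1"
    and "coprime n p" and "coprime n (p^2 - 1)"
    and "w > 0" and "0 \<le> x" and "x \<le> int p - 1"
    and "[poly (cheb n) x = x] (mod (int p ^ w))"
    and "[poly (cheb_deriv 1 n) x = 1] (mod (int p ^ w))"
  shows "[poly (cheb_deriv 1 n) (x + int h * int p) = poly (cheb_deriv 1 n) x]
            (mod (int p ^ (w + 1)))
         \<and> (\<forall>m::nat. m \<ge> 2 \<longrightarrow>
              [(poly (cheb_deriv m n) (x + int h * int p) div fact m) * int p ^ m = 0]
                (mod (int p ^ (w + 2))))"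
proof -
  let ?P = "int p"
  let ?R = "\<lambda>b. pcompose (cheb n) [:b, int p:]"
  note p = assms(1) and p3 = assms(2)
  have P: "prime ?P" using p by simp
  have h1: "[poly (cheb n) x = x] (mod ?P^w)" using assms(9) .
  have h2: "[poly (pderiv (cheb n)) x = 1] (mod ?P^w)" using assms(10) by (simp add: cheb_deriv_def)
  obtain b t0 where good: "\<forall>m\<ge>2. ?P^(w+2) dvd coeff (?R b) m" and xb: "x = b + t0 * ?P"
  proof (cases "?P dvd (1 - x^2)")
    case False
    show ?thesis using that[of x 0] caseA_good[OF p p3 False h1 h2] by simp
  next
    case True
    have "1 - x^2 = (1 - x) * (1 + x)" by (simp add: power2_eq_square algebra_simps)
    with True have "?P dvd (1 - x) \<or> ?P dvd (1 + x)" using P prime_dvd_mult_iff by metis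
    then show ?thesis
    proof
      assume a: "?P dvd (1 - x)"
      have "x = 1"
      proof (rule ccontr)
        assume "x \<noteq> 1"
        then have "1 - x \<noteq> 0" by simp
        then have "\<bar>?P\<bar> \<le> \<bar>1 - x\<bar>" using a dvd_imp_le_int by blast
        then show False using assms(7,8) p3 by linarith
      qed
      have "?P^w dvd int n^2 - 1" using h2 D1_at_1[of n] \<open>x = 1\<close> by (simp add: cong_iff_dvd_diff)
      then have "\<forall>m\<ge>2. ?P^(w+2) dvd coeff (?R 1) m"
        using special_good[OF p p3, of 1] by simp
      then show ?thesis using that[of 1 0] \<open>x = 1\<close> by simp
    next
      assume a: "?P dvd (1 + x)"
      have "1 + x \<noteq> 0" using assms(7) by simp
      then have "\<bar>?P\<bar> \<le> \<bar>1 + x\<bar>" using a dvd_imp_le_int by blast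
      then have xp: "x = ?P - 1" using assms(7,8) by linarith
      have "odd n" using odd_n[OF p p3 assms(5)] .
      then have "\<forall>m\<ge>2. ?P^(w+2) dvd coeff (?R (-1)) m"
        using caseC_good[OF p p3] h2 xp by simp
      then show ?thesis using that[of "-1" 1] xp by simp
    qed
  qed
  let ?y = "x + int h * int p"
  have gd: "\<And>j. j \<ge> 2 \<Longrightarrow> ?P^(w+2) dvd coeff (?R b) j" using good by blast
  have ey: "pcompose (?R b) [:t0 + int h, 1:] = ?R ?y" unfolding comp_shift xb by (simp add: algebra_simps)
  have ex: "pcompose (?R b) [:t0, 1:] = ?R x" unfolding comp_shift xb by simp
  have sy: "(\<forall>j\<ge>2. ?P^(w+2) dvd coeff (?R ?y) j) \<and> [coeff (?R ?y) 1 = coeff (?R b) 1] (mod ?P^(w+2))"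
    using shift_lemma[OF gd, of "t0 + int h"] unfolding ey .
  have sx: "[coeff (?R x) 1 = coeff (?R b) 1] (mod ?P^(w+2))"
    using shift_lemma[OF gd, of t0] unfolding ex by blast
  have "[coeff (?R ?y) 1 = coeff (?R x) 1] (mod ?P^(w+2))"
    using cong_trans[OF conjunct2[OF sy] cong_sym[OF sx]] .
  then have "?P * ?P^(w+1) dvd ?P * (poly (pderiv (cheb n)) ?y - poly (pderiv (cheb n)) x)"
    unfolding coeff1_pcompose by (simp add: cong_iff_dvd_diff algebra_simps)
  then have "?P^(w+1) dvd poly (pderiv (cheb n)) ?y - poly (pderiv (cheb n)) x"
    using p by (subst (asm) dvd_mult_cancel_left) simp
  then have C1: "[poly (cheb_deriv 1 n) ?y = poly (cheb_deriv 1 n) x] (mod ?P^(w+1))"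
    by (simp add: cong_iff_dvd_diff cheb_deriv_def)
  have C2: "[(poly (cheb_deriv m n) ?y div fact m) * ?P^m = 0] (mod ?P^(w+2))" if m: "m \<ge> 2" for m
  proof -
    let ?Dm = "poly ((pderiv ^^ m) (cheb n)) ?y"
    have "fact m * coeff (pcompose (cheb n) [:?y, 1:]) m = 1^m * ?Dm" by (rule fact_coeff_pcompose)
    then have fd: "?Dm = fact m * coeff (pcompose (cheb n) [:?y, 1:]) m" by simp
    have "fact m * coeff (?R ?y) m = ?P^m * ?Dm" by (rule fact_coeff_pcompose)
    also have "\<dots> = fact m * (?P^m * coeff (pcompose (cheb n) [:?y, 1:]) m)" unfolding fd by (simp add: algebra_simps)
    finally have "coeff (?R ?y) m = ?P^m * coeff (pcompose (cheb n) [:?y, 1:]) m" by simp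
    moreover have "?Dm div fact m = coeff (pcompose (cheb n) [:?y, 1:]) m" unfolding fd by simp
    ultimately have "(?Dm div fact m) * ?P^m = coeff (?R ?y) m" by simp
    then show ?thesis using sy m by (simp add: cong_0_iff cheb_deriv_def)
  qed
  show ?thesis using C1 C2 by blast
qed

end
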